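(* Let $\mathcal H$ be a well-structured preconditioner set. For all $M_1,M_2\in\mathcal S^d_{++}$, $P_{\mathcal H}(M_1+M_2)^2=P_{\mathcal H}(M_1)^2+P_{\mathcal H}(M_2)^2$; for every $M\in\mathcal S^d_{++}$ and $c>0$, $P_{\mathcal H}(cM)^2=cP_{\mathcal H}(M)^2$; and for all $A,B\in\mathcal S^d_{++}$ with $A\preceq B$, $P_{\mathcal H}(A)\preceq P_{\mathcal H}(B)$.
   Context: $\mathcal S^d_+$ (resp. $\mathcal S^d_{++}$) denotes the set of real symmetric positive semidefinite (resp. positive definite) $d\times d$ matrices; $\langle A,B\rangle=\operatorname{Tr}(A^\top B)$. A set $\mathcal H\subseteq\mathcal S_+^d$ is a well-structured preconditioner set if $\mathcal H=\mathcal S_+^d\cap\mathcal K$ for some set $\mathcal K$ of real $d\times d$ matrices that is closed under scalar multiplication, matrix addition and matrix multiplication and contains the identity $I_d$. For $M\in\mathcal S^d_{++}$, $P_{\mathcal H}(M):=\arg\min_{H\in\mathcal H\cap\mathcal S^d_{++}}\langle M,H^{-1}\rangle+\operatorname{Tr}(H)$ (the minimizer exists and is unique). *)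

theory Defs
  imports "HOL-Analysis.Analysis"
begin

text \<open>Real d x d matrices are rendered as real^'d^'d, d = CARD('d).\<close>

definition psd :: "real^'d^'d \<Rightarrow> bool" where
  "psd A \<longleftrightarrow> transpose A = A \<and> (\<forall>x. 0 \<le> x \<bullet> (A *v x))"

definition pd :: "real^'d^'d \<Rightarrow> bool" where
  "pd A \<longleftrightarrow> transpose A = A \<and> (\<forall>x. x \<noteq> 0 \<longrightarrow> 0 < x \<bullet> (A *v x))"

definition frob :: "real^'d^'d \<Rightarrow> real^'d^'d \<Rightarrow> real" where
  "frob A B = trace (transpose A ** B)"

definition loewner_le :: "real^'d^'d \<Rightarrow> real^'d^'d \<Rightarrow> bool" where
  "loewner_le A B \<longleftrightarrow> psd (B - A)"

definition well_structured :: "(real^'d^'d) set \<Rightarrow> bool" where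
  "well_structured H \<longleftrightarrow> (\<exists>K :: (real^'d^'d) set.
      (\<forall>c A. A \<in> K \<longrightarrow> c *\<^sub>R A \<in> K) \<and>
      (\<forall>A B. A \<in> K \<longrightarrow> B \<in> K \<longrightarrow> A + B \<in> K) \<and>
      (\<forall>A B. A \<in> K \<longrightarrow> B \<in> K \<longrightarrow> A ** B \<in> K) \<and>
      mat 1 \<in> K \<and>
      H = {A. psd A} \<inter> K)"

definition precond_obj :: "real^'d^'d \<Rightarrow> real^'d^'d \<Rightarrow> real" where
  "precond_obj M G = frob M (matrix_inv G) + trace G"

definition P_H :: "(real^'d^'d) set \<Rightarrow> real^'d^'d \<Rightarrow> real^'d^'d" where
  "P_H H M = (THE G. G \<in> H \<and> pd G \<and>
      (\<forall>G'\<in>H. pd G' \<longrightarrow> precond_obj M G \<le> precond_obj M G'))"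

end

theory Submission
  imports Defs
begin

lemma sym_inner:
  fixes S :: "real^'n^'n"
  assumes "transpose S = S"
  shows "x \<bullet> (S *v y) = (S *v x) \<bullet> y"
proof -
  have "x v* S = S *v x" using vector_transpose_matrix[of x S] assms by simp
  then show ?thesis using dot_lmul_matrix[of x S y] by simp
qed

lemma rayleigh_eigen:
  fixes S :: "real^'n^'n"
  assumes sym: "transpose S = S" and V: "subspace V" and inv: "\<forall>x\<in>V. S *v x \<in> V"
    and vV: "v \<in> V" and nv: "norm v = 1"
    and max: "\<forall>y\<in>V. norm y = 1 \<longrightarrow> y \<bullet> (S *v y) \<le> v \<bullet> (S *v v)"
  shows "S *v v = (v \<bullet> (S *v v)) *\<^sub>R v"
proof -
  define l where "l = v \<bullet> (S *v v)"
  define w where "w = S *v v - l *\<^sub>R v"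
  have vv: "v \<bullet> v = 1" using nv by (simp add: power2_norm_eq_inner[symmetric])
  have wV: "w \<in> V" unfolding w_def using V inv vV by (simp add: subspace_diff subspace_mul)
  have wv: "w \<bullet> v = 0"
  proof -
    have "w \<bullet> v = (S *v v) \<bullet> v - l * (v \<bullet> v)" by (simp add: w_def inner_diff_left)
    then show ?thesis by (simp add: vv l_def inner_commute)
  qed
  have gen: "y \<bullet> (S *v y) \<le> l * (y \<bullet> y)" if yV: "y \<in> V" for y
  proof (cases "y = 0")
    case True then show ?thesis by simp
  next
    case False
    define z where "z = (1 / norm y) *\<^sub>R y"
    have "z \<in> V" unfolding z_def using V yV by (simp add: subspace_mul)
    moreover have "norm z = 1" unfolding z_def using False by simp
    ultimately have "z \<bullet> (S *v z) \<le> l" using max l_def by auto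
    moreover have "z \<bullet> (S *v z) = (y \<bullet> (S *v y)) / (norm y)^2"
      unfolding z_def by (simp add: matrix_vector_mult_scaleR power2_eq_square)
    ultimately have "y \<bullet> (S *v y) / (norm y)^2 \<le> l" by simp
    then have "y \<bullet> (S *v y) \<le> l * (norm y)^2" using False by (simp add: divide_le_eq)
    then show ?thesis by (simp add: power2_norm_eq_inner)
  qed
  define a where "a = w \<bullet> w"
  define c where "c = w \<bullet> (S *v w)"
  have wSv: "w \<bullet> (S *v v) = a"
  proof -
    have "S *v v = w + l *\<^sub>R v" unfolding w_def by simp
    then show ?thesis using wv by (simp add: a_def inner_add_right)
  qed
  have vSw: "v \<bullet> (S *v w) = a" using sym_inner[OF sym, of v w] wSv by (simp add: inner_commute)
  have key: "2 * t * a \<le> t^2 * (l * a - c)" for t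
  proof -
    have yV: "v + t *\<^sub>R w \<in> V" using V vV wV by (simp add: subspace_add subspace_mul)
    have e1: "(v + t *\<^sub>R w) \<bullet> (S *v (v + t *\<^sub>R w)) = l + 2 * t * a + t^2 * c"
      by (simp add: matrix_vector_right_distrib inner_add_left inner_add_right
          matrix_vector_mult_scaleR l_def[symmetric] c_def[symmetric] wSv vSw power2_eq_square algebra_simps)
    have e2: "(v + t *\<^sub>R w) \<bullet> (v + t *\<^sub>R w) = 1 + t^2 * a"
      by (simp add: inner_add_left inner_add_right vv wv inner_commute[of v w] a_def power2_eq_square)
    from gen[OF yV] e1 e2 have "l + 2 * t * a + t^2 * c \<le> l * (1 + t^2 * a)" by simp
    then show ?thesis by (simp add: algebra_simps)
  qed
  have "a \<le> 0"
  proof (rule ccontr)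
    assume "\<not> a \<le> 0"
    then have ap: "a > 0" by simp
    define C where "C = l * a - c"
    define t where "t = a / (\<bar>C\<bar> + 1)"
    have tp: "t > 0" unfolding t_def using ap by simp
    have "2 * t * a \<le> t^2 * C" using key[of t] C_def by simp
    also have "\<dots> \<le> t^2 * \<bar>C\<bar>" by (simp add: mult_left_mono)
    finally have "2 * a \<le> t * \<bar>C\<bar>" using tp by (simp add: power2_eq_square)
    also have "t * \<bar>C\<bar> = a * (\<bar>C\<bar> / (\<bar>C\<bar> + 1))" unfolding t_def by simp
    also have "\<dots> \<le> a * 1" using ap by (intro mult_left_mono) auto
    finally show False using ap by simp
  qed
  then have "w = 0" unfolding a_def by (metis inner_eq_zero_iff order_antisym inner_ge_zero)
  then show ?thesis unfolding w_def l_def by simp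
qed

lemma spectral_sub:
  fixes S :: "real^'n^'n"
  assumes sym: "transpose S = S"
  shows "subspace V \<Longrightarrow> (\<forall>x\<in>V. S *v x \<in> V) \<Longrightarrow>
    \<exists>B. B \<subseteq> V \<and> pairwise orthogonal B \<and> (\<forall>u\<in>B. norm u = 1) \<and> span B = V \<and>
        (\<forall>u\<in>B. S *v u = (u \<bullet> (S *v u)) *\<^sub>R u)"
proof (induction "dim V" arbitrary: V rule: less_induct)
  case less
  note V = less.prems(1) and inv = less.prems(2)
  show ?case
  proof (cases "V = {0}")
    case True
    then show ?thesis by (intro exI[of _ "{}"]) auto
  next
    case False
    then obtain x where xV: "x \<in> V" and x0: "x \<noteq> 0" using V subspace_0 by blast
    define T where "T = sphere 0 1 \<inter> V"
    have cT: "compact T" unfolding T_def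
      by (intro compact_Int_closed compact_sphere closed_subspace V)
    have "(1 / norm x) *\<^sub>R x \<in> T" unfolding T_def using x0 V xV by (simp add: subspace_mul)
    then have neT: "T \<noteq> {}" by auto
    have cont: "continuous_on T (\<lambda>y. y \<bullet> (S *v y))"
      by (intro continuous_intros linear_continuous_on linear_linear[THEN iffD1] matrix_vector_mul_linear)
    obtain v where vT: "v \<in> T" and vmax: "\<forall>y\<in>T. y \<bullet> (S *v y) \<le> v \<bullet> (S *v v)"
      using continuous_attains_sup[OF cT neT cont] by blast
    have vV: "v \<in> V" and nv: "norm v = 1" using vT unfolding T_def by auto
    have ev: "S *v v = (v \<bullet> (S *v v)) *\<^sub>R v"
      by (rule rayleigh_eigen[OF sym V inv vV nv]) (use vmax T_def in auto)
    have vv: "v \<bullet> v = 1" using nv by (simp add: power2_norm_eq_inner[symmetric])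
    define V' where "V' = V \<inter> {y. orthogonal v y}"
    have V'sub: "subspace V'" unfolding V'_def by (intro subspace_inter V subspace_orthogonal_to_vector)
    have V'inv: "\<forall>y\<in>V'. S *v y \<in> V'"
    proof
      fix y assume "y \<in> V'"
      then have yV: "y \<in> V" and vy: "v \<bullet> y = 0" unfolding V'_def orthogonal_def by auto
      have "v \<bullet> (S *v y) = (S *v v) \<bullet> y" by (rule sym_inner[OF sym])
      also have "\<dots> = 0" by (subst ev) (simp add: vy)
      finally show "S *v y \<in> V'" unfolding V'_def orthogonal_def using inv yV by auto
    qed
    have "v \<notin> V'" unfolding V'_def using vv by (auto simp: orthogonal_def)
    then have "V' \<subset> V" using vV unfolding V'_def by blast
    then have "dim V' < dim V" using V V'sub by (metis dim_psubset span_eq_iff)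
    from less.hyps[OF this V'sub V'inv] obtain B' where
      B': "B' \<subseteq> V'" "pairwise orthogonal B'" "\<forall>u\<in>B'. norm u = 1" "span B' = V'"
          "\<forall>u\<in>B'. S *v u = (u \<bullet> (S *v u)) *\<^sub>R u" by blast
    have orthv: "\<forall>u\<in>B'. orthogonal v u" using B'(1) unfolding V'_def by auto
    show ?thesis
    proof (intro exI[of _ "insert v B'"] conjI)
      show "insert v B' \<subseteq> V" using vV B'(1) V'_def by auto
      show "pairwise orthogonal (insert v B')"
        using B'(2) orthv by (auto simp: pairwise_insert orthogonal_commute)
      show "\<forall>u\<in>insert v B'. norm u = 1" using nv B'(3) by auto
      show "\<forall>u\<in>insert v B'. S *v u = (u \<bullet> (S *v u)) *\<^sub>R u" using ev B'(5) by auto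
      show "span (insert v B') = V"
      proof
        show "span (insert v B') \<subseteq> V"
          using vV B'(1) V'_def V by (intro span_minimal) auto
        show "V \<subseteq> span (insert v B')"
        proof
          fix y assume yV: "y \<in> V"
          define z where "z = y - (v \<bullet> y) *\<^sub>R v"
          have "z \<in> V'" unfolding V'_def z_def orthogonal_def using yV vV V vv
            by (simp add: subspace_diff subspace_mul inner_diff_right)
          then have "z \<in> span (insert v B')" using B'(4) span_mono[of B' "insert v B'"] by auto
          moreover have "(v \<bullet> y) *\<^sub>R v \<in> span (insert v B')" by (simp add: span_base span_mul)
          ultimately have "z + (v \<bullet> y) *\<^sub>R v \<in> span (insert v B')" by (rule span_add)
          then show "y \<in> span (insert v B')" unfolding z_def by simp
        qed
      qed
    qed
  qed
qed

definition eigbasis :: "real^'n^'n \<Rightarrow> (real^'n) set \<Rightarrow> bool" where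
  "eigbasis S B \<longleftrightarrow> finite B \<and> (\<forall>u\<in>B. \<forall>w\<in>B. u \<bullet> w = (if u = w then 1 else 0)) \<and>
     (\<forall>x. x = (\<Sum>u\<in>B. (u \<bullet> x) *\<^sub>R u)) \<and> (\<forall>u\<in>B. S *v u = (u \<bullet> (S *v u)) *\<^sub>R u)"

lemma eigbasis_exists:
  fixes S :: "real^'n^'n"
  assumes sym: "transpose S = S"
  shows "\<exists>B. eigbasis S B"
proof -
  obtain B where B: "pairwise orthogonal B" "\<forall>u\<in>B. norm u = 1" "span B = UNIV"
      "\<forall>u\<in>B. S *v u = (u \<bullet> (S *v u)) *\<^sub>R u"
    using spectral_sub[OF sym, of UNIV] by auto
  have "0 \<notin> B" using B(2) by auto
  then have fin: "finite B" using B(1) pairwise_orthogonal_independent independent_imp_finite by blast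
  have on: "\<forall>u\<in>B. \<forall>w\<in>B. u \<bullet> w = (if u = w then 1 else 0)"
  proof (intro ballI)
    fix u w assume "u \<in> B" "w \<in> B"
    then show "u \<bullet> w = (if u = w then 1 else 0)"
      using B(1,2) by (auto simp: pairwise_def orthogonal_def power2_norm_eq_inner[symmetric])
  qed
  have exp: "x = (\<Sum>u\<in>B. (u \<bullet> x) *\<^sub>R u)" for x
  proof -
    define y where "y = x - (\<Sum>u\<in>B. (u \<bullet> x) *\<^sub>R u)"
    have "\<forall>w\<in>B. orthogonal y w"
    proof
      fix w assume wB: "w \<in> B"
      have "w \<bullet> (\<Sum>u\<in>B. (u \<bullet> x) *\<^sub>R u) = (\<Sum>u\<in>B. (u \<bullet> x) * (w \<bullet> u))"
        by (simp add: inner_sum_right)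
      also have "\<dots> = (\<Sum>u\<in>B. if u = w then w \<bullet> x else 0)"
        using on wB by (intro sum.cong) auto
      also have "\<dots> = w \<bullet> x" using fin wB by simp
      finally have "w \<bullet> y = 0" unfolding y_def by (simp add: inner_diff_right)
      then show "orthogonal y w" unfolding orthogonal_def by (simp add: inner_commute)
    qed
    then have "B \<subseteq> {z. orthogonal y z}" by auto
    then have "span B \<subseteq> {z. orthogonal y z}"
      by (intro span_minimal subspace_orthogonal_to_vector)
    then have "orthogonal y y" using B(3) by auto
    then have "y = 0" by (simp add: orthogonal_def)
    then show ?thesis unfolding y_def by simp
  qed
  show ?thesis unfolding eigbasis_def using fin on exp B(4) by blast
qed

definition outer :: "real^'n \<Rightarrow> real^'n \<Rightarrow> real^'n^'n" where
  "outer a b = (\<chi> i j. a$i * b$j)"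

lemma outer_mulv: "outer a b *v x = (b \<bullet> x) *\<^sub>R a"
  by (auto simp: outer_def matrix_vector_mult_def inner_vec_def vec_eq_iff sum_distrib_left sum_distrib_right mult_ac)

lemma mulv_sum: "(\<Sum>u\<in>A. M u) *v x = (\<Sum>u\<in>A. M u *v x)"
  by (induction A rule: infinite_finite_induct) (auto simp: matrix_vector_mult_add_rdistrib)

lemma inner_outer: "X \<bullet> outer a b = a \<bullet> (X *v b)"
  by (simp add: outer_def matrix_vector_mult_def inner_vec_def sum_distrib_left mult_ac)

lemma frob_inner: "frob A B = A \<bullet> B"
  unfolding frob_def trace_def matrix_matrix_mult_def transpose_def inner_vec_def
  by (simp, subst sum.swap, simp)

lemma transpose_add': "transpose (A + B) = transpose A + transpose (B::real^'n^'n)"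
  by (simp add: transpose_def vec_eq_iff)

lemma transpose_diff': "transpose (A - B) = transpose A - transpose (B::real^'n^'n)"
  by (simp add: transpose_def vec_eq_iff)

definition fc :: "(real \<Rightarrow> real) \<Rightarrow> real^'n^'n \<Rightarrow> (real^'n) set \<Rightarrow> real^'n^'n" where
  "fc f S B = (\<Sum>u\<in>B. f (u \<bullet> (S *v u)) *\<^sub>R outer u u)"

context
  fixes S :: "real^'n^'n" and B
  assumes eb: "eigbasis S B"
begin

lemma eb_fin: "finite B" using eb eigbasis_def by blast
lemma eb_on: "u \<in> B \<Longrightarrow> w \<in> B \<Longrightarrow> u \<bullet> w = (if u = w then 1 else 0)"
  using eb eigbasis_def by blast
lemma eb_exp: "x = (\<Sum>u\<in>B. (u \<bullet> x) *\<^sub>R u)" using eb eigbasis_def by blast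
lemma eb_ev: "u \<in> B \<Longrightarrow> S *v u = (u \<bullet> (S *v u)) *\<^sub>R u" using eb eigbasis_def by blast

lemma eb_coord: "u \<in> B \<Longrightarrow> u \<bullet> (\<Sum>w\<in>B. c w *\<^sub>R w) = c u"
proof -
  assume uB: "u \<in> B"
  have "u \<bullet> (\<Sum>w\<in>B. c w *\<^sub>R w) = (\<Sum>w\<in>B. c w * (u \<bullet> w))" by (simp add: inner_sum_right)
  also have "\<dots> = (\<Sum>w\<in>B. if w = u then c u else 0)" using uB eb_on by (intro sum.cong) auto
  also have "\<dots> = c u" using eb_fin uB by simp
  finally show ?thesis .
qed

lemma fc_mulv: "fc f S B *v x = (\<Sum>u\<in>B. (f (u \<bullet> (S *v u)) * (u \<bullet> x)) *\<^sub>R u)"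
  unfolding fc_def mulv_sum
  by (simp add: scaleR_matrix_vector_assoc[symmetric] outer_mulv)

lemma fc_coord: "u \<in> B \<Longrightarrow> u \<bullet> (fc f S B *v x) = f (u \<bullet> (S *v u)) * (u \<bullet> x)"
  unfolding fc_mulv by (rule eb_coord)

lemma fc_mult: "fc f S B ** fc g S B = fc (\<lambda>t. f t * g t) S B"
proof -
  have "(fc f S B ** fc g S B) *v x = fc (\<lambda>t. f t * g t) S B *v x" for x
  proof -
    have "(fc f S B ** fc g S B) *v x = fc f S B *v (fc g S B *v x)"
      by (simp add: matrix_vector_mul_assoc)
    also have "\<dots> = (\<Sum>u\<in>B. (f (u \<bullet> (S *v u)) * (g (u \<bullet> (S *v u)) * (u \<bullet> x))) *\<^sub>R u)"
      unfolding fc_mulv[of f] by (intro sum.cong refl) (simp add: fc_coord)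
    also have "\<dots> = fc (\<lambda>t. f t * g t) S B *v x" unfolding fc_mulv by (simp add: mult.assoc)
    finally show ?thesis .
  qed
  then show ?thesis by (simp add: matrix_eq)
qed

lemma fc_id: "fc (\<lambda>t. t) S B = S"
proof -
  have "S *v x = fc (\<lambda>t. t) S B *v x" for x
  proof -
    have "S *v x = S *v (\<Sum>u\<in>B. (u \<bullet> x) *\<^sub>R u)" using eb_exp by metis
    also have "\<dots> = (\<Sum>u\<in>B. (u \<bullet> x) *\<^sub>R (S *v u))"
      by (simp add: linear_sum[OF matrix_vector_mul_linear] matrix_vector_mult_scaleR)
    also have "\<dots> = (\<Sum>u\<in>B. ((u \<bullet> (S *v u)) * (u \<bullet> x)) *\<^sub>R u)"
      by (intro sum.cong refl) (subst eb_ev, auto)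
    also have "\<dots> = fc (\<lambda>t. t) S B *v x" unfolding fc_mulv by simp
    finally show ?thesis .
  qed
  then show ?thesis by (simp add: matrix_eq)
qed

lemma fc_const: "fc (\<lambda>t. c) S B = c *\<^sub>R mat 1"
proof -
  have "fc (\<lambda>t. c) S B *v x = (c *\<^sub>R mat 1) *v x" for x
  proof -
    have "fc (\<lambda>t. c) S B *v x = c *\<^sub>R (\<Sum>u\<in>B. (u \<bullet> x) *\<^sub>R u)"
      unfolding fc_mulv by (simp add: scaleR_sum_right)
    also have "\<dots> = c *\<^sub>R x" using eb_exp by metis
    finally show ?thesis by (simp add: scaleR_matrix_vector_assoc[symmetric])
  qed
  then show ?thesis by (simp add: matrix_eq)
qed

lemma fc_add: "fc (\<lambda>t. f t + g t) S B = fc f S B + fc g S B"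
  unfolding fc_def by (simp add: scaleR_add_left sum.distrib)

lemma fc_scale: "fc (\<lambda>t. c * f t) S B = c *\<^sub>R fc f S B"
  unfolding fc_def by (simp add: scaleR_sum_right)

lemma fc_cong: "(\<And>u. u \<in> B \<Longrightarrow> f (u \<bullet> (S *v u)) = g (u \<bullet> (S *v u))) \<Longrightarrow> fc f S B = fc g S B"
  unfolding fc_def by (intro sum.cong) auto

lemma fc_sym: "transpose (fc f S B) = fc f S B"
  unfolding fc_def outer_def transpose_def by (simp add: vec_eq_iff mult.commute)

lemma fc_quad: "x \<bullet> (fc f S B *v x) = (\<Sum>u\<in>B. f (u \<bullet> (S *v u)) * (u \<bullet> x)^2)"
  unfolding fc_mulv by (simp add: inner_sum_right power2_eq_square inner_commute mult.assoc)

lemma fc_inner: "X \<bullet> fc f S B = (\<Sum>u\<in>B. f (u \<bullet> (S *v u)) * (u \<bullet> (X *v u)))"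
  unfolding fc_def by (simp add: inner_sum_right inner_outer)

lemma fc_trace: "trace (fc f S B) = (\<Sum>u\<in>B. f (u \<bullet> (S *v u)))"
proof -
  have "trace (fc f S B) = frob (mat 1) (fc f S B)" by (simp add: frob_def)
  also have "\<dots> = (\<Sum>u\<in>B. f (u \<bullet> (S *v u)))"
    unfolding frob_inner fc_inner by (intro sum.cong refl) (simp add: eb_on)
  finally show ?thesis .
qed

lemma eb_nonzero: "u \<in> B \<Longrightarrow> u \<noteq> 0" using eb_on[of u u] by auto

lemma eb_some: "x \<noteq> 0 \<Longrightarrow> \<exists>u\<in>B. u \<bullet> x \<noteq> 0"
  using eb_exp[of x] by (metis (no_types, lifting) scale_eq_0_iff sum.neutral)

lemma fc_pd: "(\<And>u. u \<in> B \<Longrightarrow> f (u \<bullet> (S *v u)) > 0) \<Longrightarrow> pd (fc f S B)"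
proof -
  assume pos: "\<And>u. u \<in> B \<Longrightarrow> f (u \<bullet> (S *v u)) > 0"
  have "0 < x \<bullet> (fc f S B *v x)" if x0: "x \<noteq> 0" for x
  proof -
    obtain u where uB: "u \<in> B" and ux: "u \<bullet> x \<noteq> 0" using eb_some[OF x0] by blast
    show ?thesis unfolding fc_quad
    proof (rule sum_pos2[OF eb_fin uB])
      show "0 < f (u \<bullet> (S *v u)) * (u \<bullet> x)^2" using pos[OF uB] ux by simp
      show "\<And>i. i \<in> B \<Longrightarrow> 0 \<le> f (i \<bullet> (S *v i)) * (i \<bullet> x)^2" using pos by (simp add: less_imp_le)
    qed
  qed
  then show ?thesis unfolding pd_def using fc_sym by blast
qed

lemma fc_psd: "(\<And>u. u \<in> B \<Longrightarrow> f (u \<bullet> (S *v u)) \<ge> 0) \<Longrightarrow> psd (fc f S B)"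
  unfolding psd_def fc_quad using fc_sym by (auto intro!: sum_nonneg)

lemma fc_in_alg:
  assumes sc: "\<forall>c A. A \<in> K \<longrightarrow> c *\<^sub>R A \<in> K"
    and ad: "\<forall>A B. A \<in> K \<longrightarrow> B \<in> K \<longrightarrow> A + B \<in> K"
    and mu: "\<forall>A B. A \<in> K \<longrightarrow> B \<in> K \<longrightarrow> A ** B \<in> K"
    and one: "mat 1 \<in> K" and SK: "S \<in> K"
  shows "fc f S B \<in> K"
proof -
  have cK: "fc (\<lambda>t. c) S B \<in> K" for c using fc_const sc one by simp
  have lin: "fc (\<lambda>t. t - m) S B \<in> K" for m
  proof -
    have "fc (\<lambda>t. t + (- m)) S B = S + fc (\<lambda>t. - m) S B" by (simp only: fc_add fc_id)
    then show ?thesis using ad SK cK by simp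
  qed
  have "\<forall>f. \<exists>g. fc g S B \<in> K \<and> (\<forall>x\<in>L. g x = f x)" if "finite L" for L :: "real set"
    using that
  proof (induction L rule: finite_induct)
    case empty
    then show ?case using cK by blast
  next
    case (insert m L)
    show ?case
    proof
      fix f :: "real \<Rightarrow> real"
      obtain g' where g'K: "fc g' S B \<in> K" and g'L: "\<forall>x\<in>L. g' x = (f x - f m) / (x - m)"
        using insert.IH[THEN spec, of "\<lambda>x. (f x - f m) / (x - m)"] by blast
      define h where "h = (\<lambda>t. f m + (t - m) * g' t)"
      have "fc h S B = fc (\<lambda>t. f m) S B + fc (\<lambda>t. t - m) S B ** fc g' S B"
        unfolding h_def by (simp only: fc_add fc_mult)
      then have "fc h S B \<in> K" using cK lin g'K ad mu by simp
      moreover have "\<forall>x\<in>insert m L. h x = f x"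
        using g'L insert.hyps(2) unfolding h_def by auto
      ultimately show "\<exists>g. fc g S B \<in> K \<and> (\<forall>x\<in>insert m L. g x = f x)" by blast
    qed
  qed
  from this[of "(\<lambda>u. u \<bullet> (S *v u)) ` B"] eb_fin obtain g where
    "fc g S B \<in> K" "\<forall>x\<in>(\<lambda>u. u \<bullet> (S *v u)) ` B. g x = f x" by blast
  moreover have "fc g S B = fc f S B" using calculation(2) by (intro fc_cong) auto
  ultimately show ?thesis by simp
qed

end


lemma pd_psd: "pd A \<Longrightarrow> psd A"
  unfolding pd_def psd_def by (metis inner_zero_left order_le_less)

lemma matrix_inv_eq:
  fixes A X :: "real^'n^'n"
  assumes "A ** X = mat 1" "X ** A = mat 1"
  shows "matrix_inv A = X"
proof -
  have ex: "\<exists>Y. A ** Y = mat 1 \<and> Y ** A = mat 1" using assms by blast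
  define Y where "Y = matrix_inv A"
  have Y: "A ** Y = mat 1 \<and> Y ** A = mat 1"
    unfolding Y_def matrix_inv_def by (rule someI_ex[OF ex])
  have "Y = Y ** (A ** X)" using assms by simp
  also have "\<dots> = (Y ** A) ** X" by (simp add: matrix_mul_assoc)
  also have "\<dots> = X" using Y by simp
  finally show ?thesis unfolding Y_def by simp
qed

definition projK :: "(real^'n^'n) set \<Rightarrow> real^'n^'n \<Rightarrow> real^'n^'n" where
  "projK K M = (SOME Y. Y \<in> K \<and> transpose Y = Y \<and>
      (\<forall>X. X \<in> K \<longrightarrow> transpose X = X \<longrightarrow> (M - Y) \<bullet> X = 0))"

locale walg =
  fixes K :: "(real^'n^'n) set"
  assumes sc: "\<forall>c A. A \<in> K \<longrightarrow> c *\<^sub>R A \<in> K"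
    and ad: "\<forall>A B. A \<in> K \<longrightarrow> B \<in> K \<longrightarrow> A + B \<in> K"
    and mu: "\<forall>A B. A \<in> K \<longrightarrow> B \<in> K \<longrightarrow> A ** B \<in> K"
    and one: "mat 1 \<in> K"
begin

definition W where "W = {X. X \<in> K \<and> transpose X = X}"

lemma W_sub: "subspace W"
proof -
  have "0 \<in> K" using sc one by (metis scaleR_zero_left)
  then show ?thesis unfolding subspace_def W_def
    using sc ad by (auto simp: transpose_add' transpose_scalar transpose_def vec_eq_iff)
qed

lemma proj_ex: "\<exists>Y. Y \<in> W \<and> (\<forall>X\<in>W. (M - Y) \<bullet> X = 0)"
proof -
  obtain y z where "y \<in> span W" "\<And>w. w \<in> span W \<Longrightarrow> orthogonal z w" "M = y + z"
    using orthogonal_subspace_decomp_exists[of W M] by blast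
  moreover have "span W = W" using W_sub span_eq_iff by blast
  ultimately show ?thesis by (intro exI[of _ y]) (auto simp: orthogonal_def)
qed

lemma proj_char: "projK K M \<in> W \<and> (\<forall>X\<in>W. (M - projK K M) \<bullet> X = 0)"
proof -
  have "projK K M \<in> K \<and> transpose (projK K M) = projK K M \<and>
      (\<forall>X. X \<in> K \<longrightarrow> transpose X = X \<longrightarrow> (M - projK K M) \<bullet> X = 0)"
    unfolding projK_def by (rule someI_ex) (use proj_ex[of M] in \<open>auto simp: W_def\<close>)
  then show ?thesis unfolding W_def by auto
qed

lemma proj_unique:
  assumes "Y \<in> W" "\<forall>X\<in>W. (M - Y) \<bullet> X = 0"
  shows "projK K M = Y"
proof -
  define D where "D = projK K M - Y"
  have DW: "D \<in> W" unfolding D_def using proj_char assms(1) W_sub by (simp add: subspace_diff)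
  have "(M - Y) \<bullet> D - (M - projK K M) \<bullet> D = 0" using assms(2) proj_char DW by simp
  then have "D \<bullet> D = 0" unfolding D_def by (simp add: inner_diff_left algebra_simps)
  then show ?thesis unfolding D_def by simp
qed

lemma proj_add: "projK K (M1 + M2) = projK K M1 + projK K M2"
proof (rule proj_unique)
  show "projK K M1 + projK K M2 \<in> W" using proj_char W_sub by (simp add: subspace_add)
  show "\<forall>X\<in>W. (M1 + M2 - (projK K M1 + projK K M2)) \<bullet> X = 0"
  proof
    fix X assume "X \<in> W"
    then have "(M1 - projK K M1) \<bullet> X + (M2 - projK K M2) \<bullet> X = 0" using proj_char by simp
    then show "(M1 + M2 - (projK K M1 + projK K M2)) \<bullet> X = 0"
      by (simp add: inner_diff_left inner_add_left algebra_simps)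
  qed
qed

lemma proj_scale: "projK K (c *\<^sub>R M) = c *\<^sub>R projK K M"
proof (rule proj_unique)
  show "c *\<^sub>R projK K M \<in> W" using proj_char W_sub by (simp add: subspace_mul)
  show "\<forall>X\<in>W. (c *\<^sub>R M - c *\<^sub>R projK K M) \<bullet> X = 0"
  proof
    fix X assume "X \<in> W"
    then have "(M - projK K M) \<bullet> X = 0" using proj_char by simp
    then show "(c *\<^sub>R M - c *\<^sub>R projK K M) \<bullet> X = 0"
      by (metis inner_scaleR_left mult_zero_right scaleR_diff_right)
  qed
qed

lemma proj_diff: "projK K (M1 - M2) = projK K M1 - projK K M2"
  using proj_add[of "M1 - M2" M2] by simp

lemma fcK: "eigbasis S B \<Longrightarrow> S \<in> K \<Longrightarrow> fc f S B \<in> K"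
  using fc_in_alg sc ad mu one by blast

lemma fcW: "eigbasis S B \<Longrightarrow> S \<in> K \<Longrightarrow> fc f S B \<in> W"
  using fcK fc_sym unfolding W_def by blast

lemma proj_eig:
  assumes eb: "eigbasis (projK K M) B" and u0: "u0 \<in> B"
  defines "S \<equiv> projK K M"
  defines "f \<equiv> (\<lambda>t. if t = u0 \<bullet> (S *v u0) then 1 else (0::real))"
  shows "(u0 \<bullet> (S *v u0)) * (\<Sum>u\<in>B. f (u \<bullet> (S *v u))) = (\<Sum>u\<in>B. f (u \<bullet> (S *v u)) * (u \<bullet> (M *v u)))"
    and "(\<Sum>u\<in>B. f (u \<bullet> (S *v u))) \<ge> 1"
proof -
  have SK: "S \<in> K" using proj_char unfolding S_def W_def by auto
  have PW: "fc f S B \<in> W" using fcW[OF eb[folded S_def] SK] .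
  then have "(M - S) \<bullet> fc f S B = 0" using proj_char unfolding S_def by blast
  then have "M \<bullet> fc f S B = S \<bullet> fc f S B" by (simp add: inner_diff_left)
  also have "S \<bullet> fc f S B = (\<Sum>u\<in>B. f (u \<bullet> (S *v u)) * (u \<bullet> (S *v u)))"
    by (rule fc_inner[OF eb[folded S_def]])
  also have "\<dots> = (\<Sum>u\<in>B. (u0 \<bullet> (S *v u0)) * f (u \<bullet> (S *v u)))"
    by (intro sum.cong refl) (simp add: f_def)
  finally show "(u0 \<bullet> (S *v u0)) * (\<Sum>u\<in>B. f (u \<bullet> (S *v u))) = (\<Sum>u\<in>B. f (u \<bullet> (S *v u)) * (u \<bullet> (M *v u)))"
    using fc_inner[OF eb[folded S_def], of M f] by (simp add: sum_distrib_left)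
  have fin: "finite B" using eb eigbasis_def by blast
  have "f (u0 \<bullet> (S *v u0)) \<le> (\<Sum>u\<in>B. f (u \<bullet> (S *v u)))"
    by (rule member_le_sum[OF u0]) (auto simp: f_def fin)
  then show "(\<Sum>u\<in>B. f (u \<bullet> (S *v u))) \<ge> 1" by (simp add: f_def)
qed

end


context walg
begin

lemma proj_sym: "transpose (projK K M) = projK K M" using proj_char W_def by blast
lemma proj_K: "projK K M \<in> K" using proj_char W_def by blast

lemma proj_psd:
  assumes "psd M" shows "psd (projK K M)"
proof -
  define S where "S = projK K M"
  obtain B where eb: "eigbasis S B" using eigbasis_exists proj_sym S_def by blast
  have "u0 \<bullet> (S *v u0) \<ge> 0" if u0: "u0 \<in> B" for u0
  proof -
    define f where "f = (\<lambda>t. if t = u0 \<bullet> (S *v u0) then 1 else (0::real))"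
    note pe = proj_eig[OF eb[unfolded S_def] u0, folded S_def f_def]
    have "(\<Sum>u\<in>B. f (u \<bullet> (S *v u)) * (u \<bullet> (M *v u))) \<ge> 0"
      using assms unfolding psd_def f_def by (intro sum_nonneg) auto
    then have "(u0 \<bullet> (S *v u0)) * (\<Sum>u\<in>B. f (u \<bullet> (S *v u))) \<ge> 0" using pe(1) unfolding f_def by simp
    with pe(2) show ?thesis unfolding f_def by (simp add: zero_le_mult_iff)
  qed
  then have "psd (fc (\<lambda>t. t) S B)" by (intro fc_psd[OF eb])
  then show ?thesis using fc_id[OF eb] S_def by simp
qed

lemma proj_pd:
  assumes "pd M" shows "pd (projK K M)"
proof -
  define S where "S = projK K M"
  obtain B where eb: "eigbasis S B" using eigbasis_exists proj_sym S_def by blast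
  have "u0 \<bullet> (S *v u0) > 0" if u0: "u0 \<in> B" for u0
  proof -
    define f where "f = (\<lambda>t. if t = u0 \<bullet> (S *v u0) then 1 else (0::real))"
    note pe = proj_eig[OF eb[unfolded S_def] u0, folded S_def f_def]
    have fin: "finite B" using eb eigbasis_def by blast
    have u00: "u0 \<noteq> 0" using eb_nonzero[OF eb u0] .
    have "f (u0 \<bullet> (S *v u0)) * (u0 \<bullet> (M *v u0)) \<le> (\<Sum>u\<in>B. f (u \<bullet> (S *v u)) * (u \<bullet> (M *v u)))"
      using assms eb_nonzero[OF eb] unfolding pd_def f_def
      by (intro member_le_sum[OF u0] fin) (auto intro: less_imp_le)
    moreover have "f (u0 \<bullet> (S *v u0)) * (u0 \<bullet> (M *v u0)) > 0"
      using assms u00 unfolding pd_def f_def by simp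
    ultimately have "(u0 \<bullet> (S *v u0)) * (\<Sum>u\<in>B. f (u \<bullet> (S *v u))) > 0" using pe(1) unfolding f_def by simp
    with pe(2) show ?thesis unfolding f_def by (simp add: zero_less_mult_iff)
  qed
  then have "pd (fc (\<lambda>t. t) S B)" by (intro fc_pd[OF eb])
  then show ?thesis using fc_id[OF eb] S_def by simp
qed

end


lemma trace_onb: "eigbasis G B \<Longrightarrow> trace X = (\<Sum>u\<in>B. u \<bullet> (X *v u))"
proof -
  assume eb: "eigbasis G B"
  have "trace X = frob X (mat 1)" by (simp add: frob_def trace_def transpose_def)
  also have "\<dots> = X \<bullet> fc (\<lambda>t. 1) G B" by (simp add: frob_inner fc_const[OF eb])
  also have "\<dots> = (\<Sum>u\<in>B. u \<bullet> (X *v u))" by (simp add: fc_inner[OF eb])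
  finally show ?thesis .
qed

context walg
begin

lemma P_char:
  assumes pdM: "pd M"
  shows "P_H ({A. psd A} \<inter> K) M ** P_H ({A. psd A} \<inter> K) M = projK K M \<and> pd (P_H ({A. psd A} \<inter> K) M)"
proof -
  define Hs where "Hs = {A. psd A} \<inter> K"
  define S where "S = projK K M"
  have pdS: "pd S" using proj_pd[OF pdM] S_def by simp
  have SK: "S \<in> K" using proj_K S_def by simp
  have SW: "\<forall>X\<in>W. (M - S) \<bullet> X = 0" using proj_char S_def by simp
  have MS: "M \<bullet> X = S \<bullet> X" if "X \<in> W" for X
    using SW that by (simp add: inner_diff_left)
  obtain B where eb: "eigbasis S B" using eigbasis_exists pdS pd_def by blast
  have evp: "u \<bullet> (S *v u) > 0" if "u \<in> B" for u
    using pdS eb_nonzero[OF eb that] unfolding pd_def by blast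
  define R where "R = fc sqrt S B"
  define Ri where "Ri = fc (\<lambda>t. inverse (sqrt t)) S B"
  have RR: "R ** R = S"
  proof -
    have "R ** R = fc (\<lambda>t. sqrt t * sqrt t) S B" unfolding R_def by (rule fc_mult[OF eb])
    also have "\<dots> = fc (\<lambda>t. t) S B" using evp by (intro fc_cong[OF eb]) (simp add: less_imp_le)
    finally show ?thesis using fc_id[OF eb] by simp
  qed
  have RRi: "R ** Ri = mat 1" "Ri ** R = mat 1"
  proof -
    have "R ** Ri = fc (\<lambda>t. sqrt t * inverse (sqrt t)) S B" unfolding R_def Ri_def by (rule fc_mult[OF eb])
    also have "\<dots> = fc (\<lambda>t. 1) S B" using evp by (intro fc_cong[OF eb]) (metis less_irrefl real_sqrt_eq_zero_cancel_iff right_inverse)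
    finally show "R ** Ri = mat 1" using fc_const[OF eb, of 1] by simp
    have "Ri ** R = fc (\<lambda>t. inverse (sqrt t) * sqrt t) S B" unfolding R_def Ri_def by (rule fc_mult[OF eb])
    also have "\<dots> = fc (\<lambda>t. 1) S B" using evp by (intro fc_cong[OF eb]) (metis less_irrefl real_sqrt_eq_zero_cancel_iff left_inverse)
    finally show "Ri ** R = mat 1" using fc_const[OF eb, of 1] by simp
  qed
  have invR: "matrix_inv R = Ri" using matrix_inv_eq RRi by blast
  have pdR: "pd R" unfolding R_def using evp by (intro fc_pd[OF eb]) simp
  have symR: "transpose R = R" using pdR pd_def by blast
  have RK: "R \<in> K" unfolding R_def using fcK[OF eb SK] .
  have RH: "R \<in> Hs" unfolding Hs_def using RK pd_psd[OF pdR] by simp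
  have trR: "trace R = (\<Sum>u\<in>B. sqrt (u \<bullet> (S *v u)))" unfolding R_def by (rule fc_trace[OF eb])
  have objR: "precond_obj M R = 2 * trace R"
  proof -
    have "frob M (matrix_inv R) = S \<bullet> Ri" unfolding invR frob_inner Ri_def
      by (rule MS[OF fcW[OF eb SK]])
    also have "\<dots> = (\<Sum>u\<in>B. inverse (sqrt (u \<bullet> (S *v u))) * (u \<bullet> (S *v u)))"
      unfolding Ri_def by (rule fc_inner[OF eb])
    also have "\<dots> = (\<Sum>u\<in>B. sqrt (u \<bullet> (S *v u)))"
    proof (intro sum.cong refl)
      fix u assume "u \<in> B"
      then have p: "u \<bullet> (S *v u) > 0" by (rule evp)
      show "inverse (sqrt (u \<bullet> (S *v u))) * (u \<bullet> (S *v u)) = sqrt (u \<bullet> (S *v u))"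
        using p by (metis less_imp_le real_div_sqrt divide_inverse_commute)
    qed
    finally show ?thesis unfolding precond_obj_def trR by simp
  qed
  have gap: "precond_obj M R \<le> precond_obj M G \<and> (precond_obj M G \<le> precond_obj M R \<longrightarrow> G = R)"
    if GH: "G \<in> Hs" and pdG: "pd G" for G
  proof -
    have GK: "G \<in> K" using GH Hs_def by simp
    have symG: "transpose G = G" using pdG pd_def by blast
    obtain C where ec: "eigbasis G C" using eigbasis_exists symG by blast
    have evG: "u \<bullet> (G *v u) > 0" if "u \<in> C" for u
      using pdG eb_nonzero[OF ec that] unfolding pd_def by blast
    define Gi where "Gi = fc inverse G C"
    have "G ** Gi = fc (\<lambda>t. t * inverse t) G C" unfolding Gi_def
      by (subst fc_id[OF ec, symmetric], subst fc_mult[OF ec]) simp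
    also have "\<dots> = fc (\<lambda>t. 1) G C" using evG by (intro fc_cong[OF ec]) (metis less_irrefl right_inverse)
    finally have GGi: "G ** Gi = mat 1" using fc_const[OF ec, of 1] by simp
    have "Gi ** G = fc (\<lambda>t. inverse t * t) G C" unfolding Gi_def
      by (subst (2) fc_id[OF ec, symmetric], subst fc_mult[OF ec]) simp
    also have "\<dots> = fc (\<lambda>t. 1) G C" using evG by (intro fc_cong[OF ec]) (metis less_irrefl left_inverse)
    finally have GiG: "Gi ** G = mat 1" using fc_const[OF ec, of 1] by simp
    have invG: "matrix_inv G = Gi" using matrix_inv_eq GGi GiG by blast
    define D where "D = R - G"
    have symD: "transpose D = D" unfolding D_def using symR symG by (simp add: transpose_diff')
    have fin: "finite C" using ec eigbasis_def by blast
    have termeq: "inverse (u \<bullet> (G *v u)) * ((D *v u) \<bullet> (D *v u)) =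
        inverse (u \<bullet> (G *v u)) * (u \<bullet> (S *v u)) - 2 * (u \<bullet> (R *v u)) + u \<bullet> (G *v u)"
      if uC: "u \<in> C" for u
    proof -
      define l where "l = u \<bullet> (G *v u)"
      have lp: "l > 0" using evG[OF uC] l_def by simp
      have uu: "u \<bullet> u = 1" using eb_on[OF ec uC uC] by simp
      have Gu: "G *v u = l *\<^sub>R u" using eb_ev[OF ec uC] l_def by simp
      have Du: "D *v u = R *v u - l *\<^sub>R u" unfolding D_def by (simp add: matrix_vector_mult_diff_rdistrib Gu)
      have RuRu: "(R *v u) \<bullet> (R *v u) = u \<bullet> (S *v u)"
        using sym_inner[OF symR, of u "R *v u"] by (simp add: RR[symmetric] matrix_vector_mul_assoc)
      have "(D *v u) \<bullet> (D *v u) = u \<bullet> (S *v u) - 2 * l * (u \<bullet> (R *v u)) + l * l"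
        unfolding Du by (simp add: inner_diff_left inner_diff_right RuRu uu inner_commute[of "R *v u" u] algebra_simps)
      then show ?thesis unfolding l_def[symmetric] using lp by (simp add: field_simps)
    qed
    have key: "precond_obj M G - precond_obj M R =
        (\<Sum>u\<in>C. inverse (u \<bullet> (G *v u)) * ((D *v u) \<bullet> (D *v u)))"
    proof -
      have "frob M (matrix_inv G) = S \<bullet> Gi" unfolding invG frob_inner Gi_def
        by (rule MS[OF fcW[OF ec GK]])
      also have "\<dots> = (\<Sum>u\<in>C. inverse (u \<bullet> (G *v u)) * (u \<bullet> (S *v u)))"
        unfolding Gi_def by (rule fc_inner[OF ec])
      finally have f1: "frob M (matrix_inv G) = \<dots>" .
      have t1: "trace R = (\<Sum>u\<in>C. u \<bullet> (R *v u))" by (rule trace_onb[OF ec])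
      have t2: "trace G = (\<Sum>u\<in>C. u \<bullet> (G *v u))" by (rule trace_onb[OF ec])
      show ?thesis unfolding objR unfolding precond_obj_def f1 t1 t2
        by (simp add: termeq sum.distrib sum_subtractf sum_distrib_left)
    qed
    have nn: "\<forall>u\<in>C. 0 \<le> inverse (u \<bullet> (G *v u)) * ((D *v u) \<bullet> (D *v u))"
      using evG by (auto intro!: mult_nonneg_nonneg simp: less_imp_le)
    have "0 \<le> (\<Sum>u\<in>C. inverse (u \<bullet> (G *v u)) * ((D *v u) \<bullet> (D *v u)))"
      using nn by (intro sum_nonneg) auto
    then have s0: "precond_obj M R \<le> precond_obj M G" using key by linarith
    have GR: "G = R" if le: "precond_obj M G \<le> precond_obj M R"
    proof -
      have "(\<Sum>u\<in>C. inverse (u \<bullet> (G *v u)) * ((D *v u) \<bullet> (D *v u))) = 0"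
        using key le s0 by linarith
      then have z: "\<forall>u\<in>C. inverse (u \<bullet> (G *v u)) * ((D *v u) \<bullet> (D *v u)) = 0"
        using sum_nonneg_eq_0_iff[OF fin, of "\<lambda>u. inverse (u \<bullet> (G *v u)) * ((D *v u) \<bullet> (D *v u))"] nn by simp
      have Du0: "D *v u = 0" if "u \<in> C" for u
        using z evG[OF that] that by auto
      have "D *v x = 0 *v x" for x
      proof -
        have "D *v x = D *v (\<Sum>u\<in>C. (u \<bullet> x) *\<^sub>R u)" using eb_exp[OF ec] by metis
        also have "\<dots> = (\<Sum>u\<in>C. (u \<bullet> x) *\<^sub>R (D *v u))"
          by (simp add: linear_sum[OF matrix_vector_mul_linear] matrix_vector_mult_scaleR)
        also have "\<dots> = 0" using Du0 by simp
        finally show ?thesis by simp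
      qed
      then have "D = 0" by (simp add: matrix_eq)
      then show ?thesis unfolding D_def by simp
    qed
    show ?thesis using s0 GR by blast
  qed
  have "P_H Hs M = R"
    unfolding P_H_def
  proof (rule the_equality)
    show "R \<in> Hs \<and> pd R \<and> (\<forall>G'\<in>Hs. pd G' \<longrightarrow> precond_obj M R \<le> precond_obj M G')"
      using RH pdR gap by blast
    fix G assume "G \<in> Hs \<and> pd G \<and> (\<forall>G'\<in>Hs. pd G' \<longrightarrow> precond_obj M G \<le> precond_obj M G')"
    then show "G = R" using gap RH pdR by blast
  qed
  then show ?thesis using RR pdR S_def Hs_def by simp
qed

end


lemma pd_add: "pd A \<Longrightarrow> pd B \<Longrightarrow> pd (A + B)"
  unfolding pd_def by (auto simp: transpose_add' matrix_vector_mult_add_rdistrib inner_add_right add_pos_pos)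

lemma pd_scale: "pd A \<Longrightarrow> c > 0 \<Longrightarrow> pd (c *\<^sub>R A)"
  unfolding pd_def by (auto simp: transpose_scalar scaleR_matrix_vector_assoc[symmetric])

lemma sqrt_mono:
  fixes RA RB :: "real^'n^'n"
  assumes pA: "pd RA" and pB: "pd RB" and ps: "psd (RB ** RB - RA ** RA)"
  shows "psd (RB - RA)"
proof -
  define D where "D = RB - RA"
  have sA: "transpose RA = RA" and sB: "transpose RB = RB" using pA pB pd_def by auto
  have symD: "transpose D = D" unfolding D_def using sA sB by (simp add: transpose_diff')
  obtain C where ec: "eigbasis D C" using eigbasis_exists symD by blast
  have "u \<bullet> (D *v u) \<ge> 0" if uC: "u \<in> C" for u
  proof (rule ccontr)
    assume "\<not> u \<bullet> (D *v u) \<ge> 0"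
    then have mn: "u \<bullet> (D *v u) < 0" by simp
    define m where "m = u \<bullet> (D *v u)"
    have u0: "u \<noteq> 0" using eb_nonzero[OF ec uC] .
    have uu: "u \<bullet> u = 1" using eb_on[OF ec uC uC] by simp
    have "D *v u = m *\<^sub>R u" using eb_ev[OF ec uC] m_def by simp
    then have RBu: "RB *v u = RA *v u + m *\<^sub>R u" unfolding D_def
      by (simp add: matrix_vector_mult_diff_rdistrib algebra_simps)
    define a where "a = u \<bullet> (RA *v u)"
    have ap: "a > 0" using pA u0 unfolding pd_def a_def by blast
    have bp: "u \<bullet> (RB *v u) > 0" using pB u0 unfolding pd_def by blast
    have b: "u \<bullet> (RB *v u) = a + m" unfolding RBu a_def by (simp add: inner_add_right uu)
    have "0 \<le> u \<bullet> ((RB ** RB - RA ** RA) *v u)" using ps unfolding psd_def by blast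
    also have "\<dots> = (RB *v u) \<bullet> (RB *v u) - (RA *v u) \<bullet> (RA *v u)"
      using sym_inner[OF sB, of u "RB *v u"] sym_inner[OF sA, of u "RA *v u"]
      by (simp add: matrix_vector_mult_diff_rdistrib inner_diff_right matrix_vector_mul_assoc[symmetric])
    also have "\<dots> = 2 * m * a + m * m"
      unfolding RBu a_def by (simp add: inner_add_left inner_add_right uu inner_commute[of "RA *v u" u] algebra_simps)
    also have "\<dots> = m * (a + (a + m))" by (simp add: algebra_simps)
    finally have "0 \<le> m * (a + (a + m))" .
    moreover have "m * (a + (a + m)) < 0" using mn m_def ap bp b by (intro mult_neg_pos) auto
    ultimately show False by simp
  qed
  then have "psd (fc (\<lambda>t. t) D C)" by (intro fc_psd[OF ec])
  then show ?thesis using fc_id[OF ec] D_def by simp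
qed

theorem lemmaA3:
  fixes H :: "(real^'d^'d) set"
  assumes "well_structured H"
  shows "(\<forall>M1 M2. pd M1 \<longrightarrow> pd M2 \<longrightarrow>
            P_H H (M1 + M2) ** P_H H (M1 + M2) = P_H H M1 ** P_H H M1 + P_H H M2 ** P_H H M2)
       \<and> (\<forall>M (c::real). pd M \<longrightarrow> c > 0 \<longrightarrow>
            P_H H (c *\<^sub>R M) ** P_H H (c *\<^sub>R M) = c *\<^sub>R (P_H H M ** P_H H M))
       \<and> (\<forall>A B. pd A \<longrightarrow> pd B \<longrightarrow> loewner_le A B \<longrightarrow> loewner_le (P_H H A) (P_H H B))"
proof -
  obtain K :: "(real^'d^'d) set" where
    sc: "\<forall>c A. A \<in> K \<longrightarrow> c *\<^sub>R A \<in> K" and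
    ad: "\<forall>A B. A \<in> K \<longrightarrow> B \<in> K \<longrightarrow> A + B \<in> K" and
    mu: "\<forall>A B. A \<in> K \<longrightarrow> B \<in> K \<longrightarrow> A ** B \<in> K" and
    one: "mat 1 \<in> K" and HK: "H = {A. psd A} \<inter> K"
    using assms unfolding well_structured_def by blast
  interpret walg K using sc ad mu one by unfold_locales
  have PC: "pd M \<Longrightarrow> P_H H M ** P_H H M = projK K M \<and> pd (P_H H M)" for M
    using P_char HK by simp
  show ?thesis
  proof (intro conjI allI impI)
    fix M1 M2 :: "real^'d^'d" assume "pd M1" "pd M2"
    then show "P_H H (M1 + M2) ** P_H H (M1 + M2) = P_H H M1 ** P_H H M1 + P_H H M2 ** P_H H M2"
      using PC pd_add proj_add by metis
  next
    fix M :: "real^'d^'d" and c :: real assume "pd M" "c > 0"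
    then show "P_H H (c *\<^sub>R M) ** P_H H (c *\<^sub>R M) = c *\<^sub>R (P_H H M ** P_H H M)"
      using PC pd_scale proj_scale by metis
  next
    fix A B :: "real^'d^'d" assume pA: "pd A" and pB: "pd B" and le: "loewner_le A B"
    have "psd (projK K (B - A))" using le proj_psd unfolding loewner_le_def by blast
    then have "psd (P_H H B ** P_H H B - P_H H A ** P_H H A)" using PC[OF pA] PC[OF pB] proj_diff by simp
    then show "loewner_le (P_H H A) (P_H H B)" unfolding loewner_le_def
      using sqrt_mono PC[OF pA] PC[OF pB] by blast
  qed
qed

end
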